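(* Let $\mathcal Z,\mathcal S$ be finite, $f:\mathcal Z\times\mathcal S\to\mathbb R$, and $(Z_i,S_i)$, $i=1,\dots,n$, random variables with a common joint law $P_{ZS}$ (not depending on $i$) such that $\Pr[\mathbf S=\mathbf s\mid\mathbf Z=\mathbf z]=\prod_{i=1}^n\Pr[S_i=s_i\mid Z_i=z_i]$. Let $P_{S|Z}$ be the conditional of $P_{ZS}$. Then for every type $p$ with $\Pr[\hat p_{\mathbf Z}=p]>0$, $$\mathbb E\Big[\Big(\sum_{i=1}^n f(Z_i,S_i)\Big)^2\Big|\ \hat p_{\mathbf Z}=p\Big]=n^2\,\mathbb E_{P_{S|Z}\times p}[f(\tilde Z,S)]^2+n\,\mathbb E_{P_{S|Z}\times p}[f(\tilde Z,S)^2]-n\,\mathbb E_{p}\Big[\mathbb E_{P_{S|Z}}[f(\tilde Z,S)\mid\tilde Z]^2\Big],$$ where $(\tilde Z,S)$ has joint pmf $p(z)P_{S|Z}(s|z)$.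
   Context: $\mathbf Z=(Z_1,\dots,Z_n)$, $\mathbf S=(S_1,\dots,S_n)$; $\hat p_{\mathbf Z}$ is the empirical distribution (type) of $\mathbf Z$. *)

theory Defs
  imports "HOL-Probability.Probability"
begin

text \<open>Conditional probability of event A given event B (0 if P(B)=0).\<close>
definition cprob :: "'a measure \<Rightarrow> 'a set \<Rightarrow> 'a set \<Rightarrow> real" where
  "cprob M A B = measure M (A \<inter> B) / measure M B"

definition cexp_event :: "'a measure \<Rightarrow> ('a \<Rightarrow> real) \<Rightarrow> 'a set \<Rightarrow> real" where
  "cexp_event M X A = (\<integral>\<omega>. indicator A \<omega> * X \<omega> \<partial>M) / measure M A"

definition emp_type :: "nat \<Rightarrow> (nat \<Rightarrow> 'a \<Rightarrow> 'z) \<Rightarrow> 'a \<Rightarrow> 'z \<Rightarrow> real" where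
  "emp_type n Z \<omega> = (\<lambda>a. real (card {i\<in>{1..n}. Z i \<omega> = a}) / real n)"

definition cond_pmf :: "('z \<times> 's::finite \<Rightarrow> real) \<Rightarrow> 'z \<Rightarrow> 's \<Rightarrow> real" where
  "cond_pmf PZS z s = PZS (z, s) / (\<Sum>s'\<in>UNIV. PZS (z, s'))"

end

theory Submission
  imports Defs
begin

lemma sumPiE_fac:
  fixes c :: "nat \<Rightarrow> 's::finite \<Rightarrow> real"
  assumes "finite I"
  shows "(\<Sum>ss\<in>PiE I (\<lambda>_. UNIV). (\<Prod>k\<in>I. c k (ss k)) * (\<Prod>k\<in>I. h k (ss k)))
       = (\<Prod>k\<in>I. \<Sum>s\<in>UNIV. c k s * h k s)"
  using assms by (simp add: prod_sum_PiE prod.distrib[symmetric])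

lemma L:
  fixes c g :: "nat \<Rightarrow> 's::finite \<Rightarrow> real"
  assumes fin: "finite I" and one: "\<And>k. k\<in>I \<Longrightarrow> (\<Sum>s\<in>UNIV. c k s) = 1"
  shows "(\<Sum>ss\<in>PiE I (\<lambda>_. UNIV). (\<Prod>k\<in>I. c k (ss k)) * (\<Sum>i\<in>I. g i (ss i))\<^sup>2)
     = (\<Sum>i\<in>I. \<Sum>j\<in>I. if i = j then (\<Sum>s\<in>UNIV. c i s * (g i s)\<^sup>2)
           else (\<Sum>s\<in>UNIV. c i s * g i s) * (\<Sum>s\<in>UNIV. c j s * g j s))"
proof -
  have "(\<Sum>ss\<in>PiE I (\<lambda>_. UNIV). (\<Prod>k\<in>I. c k (ss k)) * (\<Sum>i\<in>I. g i (ss i))\<^sup>2)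
      = (\<Sum>ss\<in>PiE I (\<lambda>_. UNIV). \<Sum>i\<in>I. \<Sum>j\<in>I. (\<Prod>k\<in>I. c k (ss k)) * (g i (ss i) * g j (ss j)))"
    proof -
      have sq: "\<And>x::nat\<Rightarrow>real. (\<Sum>i\<in>I. x i)\<^sup>2 = (\<Sum>i\<in>I. \<Sum>j\<in>I. x i * x j)"
        by (simp add: power2_eq_square sum_product)
      show ?thesis by (simp only: sq sum_distrib_left)
    qed
  also have "\<dots> = (\<Sum>i\<in>I. \<Sum>j\<in>I. \<Sum>ss\<in>PiE I (\<lambda>_. UNIV). (\<Prod>k\<in>I. c k (ss k)) * (g i (ss i) * g j (ss j)))"
    by (simp add: sum.swap[of _ "PiE I (\<lambda>_. UNIV)"] sum.swap[of _ "PiE I (\<lambda>_. UNIV)" I])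
  also have "\<dots> = (\<Sum>i\<in>I. \<Sum>j\<in>I. if i = j then (\<Sum>s\<in>UNIV. c i s * (g i s)\<^sup>2)
           else (\<Sum>s\<in>UNIV. c i s * g i s) * (\<Sum>s\<in>UNIV. c j s * g j s))"
  proof (intro sum.cong refl)
    fix i j assume ij: "i \<in> I" "j \<in> I"
    define h where "h k s = (if k = i then g i s else 1) * (if k = j then g j s else 1)" for k s
    have "(\<Sum>ss\<in>PiE I (\<lambda>_. UNIV). (\<Prod>k\<in>I. c k (ss k)) * (g i (ss i) * g j (ss j)))
        = (\<Sum>ss\<in>PiE I (\<lambda>_. UNIV). (\<Prod>k\<in>I. c k (ss k)) * (\<Prod>k\<in>I. h k (ss k)))"
      using ij fin by (simp add: h_def prod.distrib prod.delta)
    also have "\<dots> = (\<Prod>k\<in>I. \<Sum>s\<in>UNIV. c k s * h k s)" by (rule sumPiE_fac[OF fin])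
    also have "\<dots> = (if i = j then (\<Sum>s\<in>UNIV. c i s * (g i s)\<^sup>2)
           else (\<Sum>s\<in>UNIV. c i s * g i s) * (\<Sum>s\<in>UNIV. c j s * g j s))"
    proof (cases "i = j")
      case True
      have "(\<Prod>k\<in>I. \<Sum>s\<in>UNIV. c k s * h k s) = (\<Prod>k\<in>I. if k = i then (\<Sum>s\<in>UNIV. c i s * (g i s)\<^sup>2) else 1)"
        using one True by (intro prod.cong refl) (auto simp: h_def power2_eq_square mult.assoc)
      then show ?thesis using True ij fin by (simp add: prod.delta)
    next
      case False
      have "(\<Prod>k\<in>I. \<Sum>s\<in>UNIV. c k s * h k s) = (\<Prod>k\<in>I. (if k = i then (\<Sum>s\<in>UNIV. c i s * g i s) else 1)
             * (if k = j then (\<Sum>s\<in>UNIV. c j s * g j s) else 1))"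
        using one False by (intro prod.cong refl) (auto simp: h_def)
      then show ?thesis using False ij fin by (simp add: prod.distrib prod.delta)
    qed
    finally show "(\<Sum>ss\<in>PiE I (\<lambda>_. UNIV). (\<Prod>k\<in>I. c k (ss k)) * (g i (ss i) * g j (ss j))) = \<dots>" .
  qed
  finally show ?thesis .
qed

lemma G:
  fixes H :: "'b \<Rightarrow> real"
  assumes "prob_space M" "finite B" "\<And>\<omega>. \<omega>\<in>space M \<Longrightarrow> g \<omega> \<in> B"
    "\<And>b. b\<in>B \<Longrightarrow> {\<omega>\<in>space M. g \<omega> = b} \<in> sets M"
  shows "(\<integral>\<omega>. H (g \<omega>) \<partial>M) = (\<Sum>b\<in>B. measure M {\<omega>\<in>space M. g \<omega> = b} * H b)"
proof -
  interpret prob_space M by fact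
  have "(\<integral>\<omega>. H (g \<omega>) \<partial>M) = (\<integral>\<omega>. (\<Sum>b\<in>B. indicator {\<omega>\<in>space M. g \<omega> = b} \<omega> * H b) \<partial>M)"
  proof (rule Bochner_Integration.integral_cong[OF refl])
    fix \<omega> assume w: "\<omega> \<in> space M"
    have "(\<Sum>b\<in>B. indicator {\<omega>\<in>space M. g \<omega> = b} \<omega> * H b) = (\<Sum>b\<in>B. if g \<omega> = b then H b else 0)"
      using w by (intro sum.cong) (auto simp: indicator_def)
    also have "\<dots> = H (g \<omega>)" using assms(2) assms(3)[OF w] by (simp add: sum.delta)
    finally show "H (g \<omega>) = (\<Sum>b\<in>B. indicator {\<omega>\<in>space M. g \<omega> = b} \<omega> * H b)" by simp
  qed
  also have "\<dots> = (\<Sum>b\<in>B. \<integral>\<omega>. indicator {\<omega>\<in>space M. g \<omega> = b} \<omega> * H b \<partial>M)"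
    by (rule Bochner_Integration.integral_sum) (auto intro!: integrable_mult_left integrable_real_indicator assms(4) simp: less_top[symmetric])
  also have "\<dots> = (\<Sum>b\<in>B. measure M {\<omega>\<in>space M. g \<omega> = b} * H b)"
    by (intro sum.cong refl) (simp add: Int_absorb2)
  finally show ?thesis .
qed

lemma restrict_eq_PiE:
  assumes "zz \<in> PiE I (\<lambda>_. UNIV)"
  shows "(restrict f I = zz) \<longleftrightarrow> (\<forall>i\<in>I. f i = zz i)"
  using assms by (auto simp: PiE_def extensional_def fun_eq_iff restrict_def)

lemma cnt_sum:
  fixes zz :: "nat \<Rightarrow> 'z::finite" and h :: "'z \<Rightarrow> real"
  assumes tp: "(\<lambda>a. real (card {i\<in>{1..n}. zz i = a}) / real n) = p"
  shows "(\<Sum>i\<in>{1..n}. h (zz i)) = real n * (\<Sum>z\<in>UNIV. p z * h z)"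
proof -
  have card: "real (card {i\<in>{1..n}. zz i = z}) = real n * p z" for z
  proof (cases "n = 0")
    case True then show ?thesis by simp
  next
    case False
    have "real (card {i\<in>{1..n}. zz i = z}) / real n = p z" using fun_cong[OF tp, of z] by simp
    then show ?thesis using False by (simp add: field_simps)
  qed
  have "(\<Sum>i\<in>{1..n}. h (zz i)) = (\<Sum>i\<in>{1..n}. \<Sum>z\<in>UNIV. if zz i = z then h z else 0)"
    by (simp add: sum.delta)
  also have "\<dots> = (\<Sum>z\<in>UNIV. \<Sum>i\<in>{1..n}. if zz i = z then h z else 0)" by (rule sum.swap)
  also have "\<dots> = (\<Sum>z\<in>UNIV. real (card {i\<in>{1..n}. zz i = z}) * h z)"
    by (intro sum.cong refl) (simp add: sum.inter_filter[symmetric])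
  also have "\<dots> = (\<Sum>z\<in>UNIV. real n * p z * h z)"
    by (simp only: card)
  also have "\<dots> = real n * (\<Sum>z\<in>UNIV. p z * h z)"
    by (simp add: sum_distrib_left mult.assoc)
  finally show ?thesis .
qed

lemma KK:
  fixes V Mm :: "nat \<Rightarrow> real"
  shows "(\<Sum>i\<in>I. \<Sum>j\<in>I. if i = j then V i else Mm i * Mm j)
       = (\<Sum>i\<in>I. Mm i)\<^sup>2 + (\<Sum>i\<in>I. V i) - (\<Sum>i\<in>I. (Mm i)\<^sup>2)"
proof (cases "finite I")
  case True
  have "(\<Sum>i\<in>I. \<Sum>j\<in>I. if i = j then V i else Mm i * Mm j)
      = (\<Sum>i\<in>I. (\<Sum>j\<in>I. Mm i * Mm j) + (V i - (Mm i)\<^sup>2))"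
  proof (intro sum.cong refl)
    fix i assume i: "i \<in> I"
    have "(\<Sum>j\<in>I. if i = j then V i else Mm i * Mm j) = (\<Sum>j\<in>I. Mm i * Mm j + (if i = j then V i - (Mm i)\<^sup>2 else 0))"
      by (intro sum.cong refl) (auto simp: power2_eq_square)
    also have "\<dots> = (\<Sum>j\<in>I. Mm i * Mm j) + (V i - (Mm i)\<^sup>2)"
      using i True by (simp add: sum.distrib)
    finally show "(\<Sum>j\<in>I. if i = j then V i else Mm i * Mm j) = \<dots>" .
  qed
  also have "\<dots> = (\<Sum>i\<in>I. Mm i)\<^sup>2 + (\<Sum>i\<in>I. V i) - (\<Sum>i\<in>I. (Mm i)\<^sup>2)"
    by (simp add: sum.distrib sum_subtractf power2_eq_square sum_product)
  finally show ?thesis .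
qed simp
theorem lemma14:
  fixes M :: "'a measure" and n :: nat
    and Z :: "nat \<Rightarrow> 'a \<Rightarrow> 'z::finite" and S :: "nat \<Rightarrow> 'a \<Rightarrow> 's::finite"
    and f :: "'z \<times> 's \<Rightarrow> real" and PZS :: "'z \<times> 's \<Rightarrow> real"
    and p :: "'z \<Rightarrow> real"
  assumes "prob_space M"
    and Zmeas: "\<And>i. i \<in> {1..n} \<Longrightarrow> Z i \<in> measurable M (count_space UNIV)"
    and Smeas: "\<And>i. i \<in> {1..n} \<Longrightarrow> S i \<in> measurable M (count_space UNIV)"
    and common_law: "\<And>i z s. i \<in> {1..n} \<Longrightarrow>
        measure M {\<omega>\<in>space M. Z i \<omega> = z \<and> S i \<omega> = s} = PZS (z, s)"
    and cond_indep: "\<And>(zz :: nat \<Rightarrow> 'z) (ss :: nat \<Rightarrow> 's).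
        measure M {\<omega>\<in>space M. \<forall>i\<in>{1..n}. Z i \<omega> = zz i} > 0 \<Longrightarrow>
        cprob M {\<omega>\<in>space M. \<forall>i\<in>{1..n}. S i \<omega> = ss i}
                {\<omega>\<in>space M. \<forall>i\<in>{1..n}. Z i \<omega> = zz i}
        = (\<Prod>i\<in>{1..n}. cprob M {\<omega>\<in>space M. S i \<omega> = ss i} {\<omega>\<in>space M. Z i \<omega> = zz i})"
    and ptype: "measure M {\<omega>\<in>space M. emp_type n Z \<omega> = p} > 0"
  shows "cexp_event M (\<lambda>\<omega>. (\<Sum>i\<in>{1..n}. f (Z i \<omega>, S i \<omega>))\<^sup>2)
            {\<omega>\<in>space M. emp_type n Z \<omega> = p}
       = (real n)\<^sup>2 * (\<Sum>z\<in>UNIV. \<Sum>s\<in>UNIV. p z * cond_pmf PZS z s * f (z, s))\<^sup>2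
         + real n * (\<Sum>z\<in>UNIV. \<Sum>s\<in>UNIV. p z * cond_pmf PZS z s * (f (z, s))\<^sup>2)
         - real n * (\<Sum>z\<in>UNIV. p z * (\<Sum>s\<in>UNIV. cond_pmf PZS z s * f (z, s))\<^sup>2)"
proof -
  interpret prob_space M by fact
  define B where "B = PiE {1..n} (\<lambda>_. UNIV :: 'z set)"
  define C where "C = PiE {1..n} (\<lambda>_. UNIV :: 's set)"
  define zv where "zv \<omega> = restrict (\<lambda>i. Z i \<omega>) {1..n}" for \<omega>
  define sv where "sv \<omega> = restrict (\<lambda>i. S i \<omega>) {1..n}" for \<omega>
  define c where "c = cond_pmf PZS"
  define tp where "tp zz = (\<lambda>a. real (card {i\<in>{1..n}. zz i = a}) / real n)" for zz :: "nat \<Rightarrow> 'z"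
  define EZ where "EZ zz = {\<omega>\<in>space M. \<forall>i\<in>{1..n}. Z i \<omega> = zz i}" for zz
  define E where "E zz ss = {\<omega>\<in>space M. \<forall>i\<in>{1..n}. Z i \<omega> = zz i \<and> S i \<omega> = ss i}" for zz ss
  define A where "A = {\<omega>\<in>space M. emp_type n Z \<omega> = p}"
  have finB: "finite B" unfolding B_def by (simp add: finite_PiE)
  have finC: "finite C" unfolding C_def by (simp add: finite_PiE)
  have m1: "{\<omega>\<in>space M. Z i \<omega> = z} \<in> sets M" if "i \<in> {1..n}" for i z
  proof -
    have "Z i -` {z} \<inter> space M \<in> sets M" by (rule measurable_sets[OF Zmeas[OF that]]) auto
    moreover have "{\<omega>\<in>space M. Z i \<omega> = z} = Z i -` {z} \<inter> space M" by auto
    ultimately show ?thesis by simp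
  qed
  have m2: "{\<omega>\<in>space M. S i \<omega> = z} \<in> sets M" if "i \<in> {1..n}" for i z
  proof -
    have "S i -` {z} \<inter> space M \<in> sets M" by (rule measurable_sets[OF Smeas[OF that]]) auto
    moreover have "{\<omega>\<in>space M. S i \<omega> = z} = S i -` {z} \<inter> space M" by auto
    ultimately show ?thesis by simp
  qed
  have mE: "E zz ss \<in> sets M" for zz ss
    unfolding E_def by (intro sets.sets_Collect_finite_All sets.sets_Collect_conj m1 m2) auto
  have mEZ: "EZ zz \<in> sets M" for zz
    unfolding EZ_def by (intro sets.sets_Collect_finite_All m1) auto
  have PZ: "measure M {\<omega>\<in>space M. Z i \<omega> = z} = (\<Sum>s\<in>UNIV. PZS (z, s))" if i: "i \<in> {1..n}" for i z
  proof -
    have mp: "{\<omega>\<in>space M. (Z i \<omega>, S i \<omega>) = b} \<in> sets M" for b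
    proof -
      have "{\<omega>\<in>space M. (Z i \<omega>, S i \<omega>) = b} = {\<omega>\<in>space M. Z i \<omega> = fst b \<and> S i \<omega> = snd b}"
        by (auto simp: prod_eq_iff)
      then show ?thesis using m1[OF i] m2[OF i] by (simp add: sets.sets_Collect_conj)
    qed
    have "(\<integral>\<omega>. (\<lambda>(a,s). if a = z then 1 else 0::real) (Z i \<omega>, S i \<omega>) \<partial>M)
        = (\<Sum>b\<in>UNIV. measure M {\<omega>\<in>space M. (Z i \<omega>, S i \<omega>) = b} * (\<lambda>(a,s). if a = z then 1 else 0::real) b)"
      by (rule G[OF \<open>prob_space M\<close>]) (auto intro: mp)
    also have "\<dots> = (\<Sum>b\<in>UNIV. PZS b * (\<lambda>(a,s). if a = z then 1 else 0::real) b)"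
    proof (intro sum.cong refl)
      fix b :: "'z \<times> 's"
      have "{\<omega>\<in>space M. (Z i \<omega>, S i \<omega>) = b} = {\<omega>\<in>space M. Z i \<omega> = fst b \<and> S i \<omega> = snd b}"
        by (auto simp: prod_eq_iff)
      then show "measure M {\<omega>\<in>space M. (Z i \<omega>, S i \<omega>) = b} * (\<lambda>(a,s). if a = z then 1 else 0::real) b
          = PZS b * (\<lambda>(a,s). if a = z then 1 else 0::real) b"
        using common_law[OF i, of "fst b" "snd b"] by simp
    qed
    also have "\<dots> = (\<Sum>a\<in>UNIV. \<Sum>s\<in>UNIV. PZS (a, s) * (if a = z then 1 else 0))"
      by (simp add: sum.cartesian_product UNIV_Times_UNIV[symmetric] del: UNIV_Times_UNIV) (intro sum.cong refl, auto)
    also have "\<dots> = (\<Sum>s\<in>UNIV. PZS (z, s))"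
    proof (subst sum.swap, rule sum.cong[OF refl])
      fix j :: 's
      have "(\<Sum>i\<in>UNIV. PZS (i, j) * (if i = z then 1 else 0)) = (\<Sum>i\<in>UNIV. if i = z then PZS (i, j) else 0)"
        by (intro sum.cong) auto
      also have "\<dots> = PZS (z, j)" by (subst sum.delta) auto
      finally show "(\<Sum>i\<in>UNIV. PZS (i, j) * (if i = z then 1 else 0)) = PZS (z, j)" .
    qed
    finally have 1: "(\<integral>\<omega>. (\<lambda>(a,s). if a = z then 1 else 0::real) (Z i \<omega>, S i \<omega>) \<partial>M) = (\<Sum>s\<in>UNIV. PZS (z, s))" .
    have "(\<integral>\<omega>. (\<lambda>(a,s). if a = z then 1 else 0::real) (Z i \<omega>, S i \<omega>) \<partial>M)
       = (\<integral>\<omega>. indicator {\<omega>\<in>space M. Z i \<omega> = z} \<omega> \<partial>M)"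
      by (rule Bochner_Integration.integral_cong) (auto simp: indicator_def)
    also have "\<dots> = measure M {\<omega>\<in>space M. Z i \<omega> = z}"
      by (simp add: Int_absorb2)
    finally show ?thesis using 1 by simp
  qed
  have cpmf: "cprob M {\<omega>\<in>space M. S i \<omega> = s} {\<omega>\<in>space M. Z i \<omega> = z} = c z s"
    if i: "i \<in> {1..n}" for i z s
  proof -
    have "{\<omega>\<in>space M. S i \<omega> = s} \<inter> {\<omega>\<in>space M. Z i \<omega> = z} = {\<omega>\<in>space M. Z i \<omega> = z \<and> S i \<omega> = s}"
      by auto
    then show ?thesis using common_law[OF i] PZ[OF i]
      by (simp add: cprob_def c_def cond_pmf_def)
  qed
  have Q: "measure M (E zz ss) = measure M (EZ zz) * (\<Prod>i\<in>{1..n}. c (zz i) (ss i))" for zz ss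
  proof (cases "measure M (EZ zz) = 0")
    case True
    have "measure M (E zz ss) \<le> measure M (EZ zz)"
      by (rule finite_measure_mono[OF _ mEZ]) (auto simp: E_def EZ_def)
    then show ?thesis using True measure_nonneg[of M "E zz ss"] by simp
  next
    case False
    then have pos: "measure M (EZ zz) > 0" using measure_nonneg[of M "EZ zz"] by linarith
    have ci: "cprob M {\<omega>\<in>space M. \<forall>i\<in>{1..n}. S i \<omega> = ss i} (EZ zz)
        = (\<Prod>i\<in>{1..n}. c (zz i) (ss i))"
      using cond_indep[of zz ss] pos cpmf unfolding EZ_def by simp
    have "{\<omega>\<in>space M. \<forall>i\<in>{1..n}. S i \<omega> = ss i} \<inter> EZ zz = E zz ss"
      by (auto simp: E_def EZ_def)
    then show ?thesis using ci pos by (simp add: cprob_def field_simps)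
  qed
  have one: "(\<Sum>s\<in>UNIV. c (zz i) s) = 1" if pos: "measure M (EZ zz) > 0" and i: "i \<in> {1..n}" for zz i
  proof -
    have "measure M (EZ zz) \<le> measure M {\<omega>\<in>space M. Z i \<omega> = zz i}"
      by (rule finite_measure_mono[OF _ m1[OF i]]) (use i in \<open>auto simp: EZ_def\<close>)
    then have "(\<Sum>s\<in>UNIV. PZS (zz i, s)) > 0" using pos PZ[OF i] by simp
    then show ?thesis by (simp add: c_def cond_pmf_def sum_divide_distrib[symmetric])
  qed
  have INT: "(\<integral>\<omega>. W (zv \<omega>) (sv \<omega>) \<partial>M)
      = (\<Sum>zz\<in>B. measure M (EZ zz) * (\<Sum>ss\<in>C. (\<Prod>i\<in>{1..n}. c (zz i) (ss i)) * W zz ss))" for W :: "_ \<Rightarrow> _ \<Rightarrow> real"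
  proof -
    have seq: "{\<omega>\<in>space M. (zv \<omega>, sv \<omega>) = b} = E (fst b) (snd b)" if "b \<in> B \<times> C" for b
    proof -
      have b1: "fst b \<in> PiE {1..n} (\<lambda>_. UNIV)" and b2: "snd b \<in> PiE {1..n} (\<lambda>_. UNIV)"
        using that by (auto simp: B_def C_def mem_Times_iff)
      have e1: "zv \<omega> = fst b \<longleftrightarrow> (\<forall>i\<in>{1..n}. Z i \<omega> = fst b i)" for \<omega>
        unfolding zv_def by (rule restrict_eq_PiE[OF b1])
      have e2: "sv \<omega> = snd b \<longleftrightarrow> (\<forall>i\<in>{1..n}. S i \<omega> = snd b i)" for \<omega>
        unfolding sv_def by (rule restrict_eq_PiE[OF b2])
      show ?thesis unfolding E_def prod_eq_iff fst_conv snd_conv e1 e2 by blast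
    qed
    have "(\<integral>\<omega>. case_prod W (zv \<omega>, sv \<omega>) \<partial>M)
        = (\<Sum>b\<in>B \<times> C. measure M {\<omega>\<in>space M. (zv \<omega>, sv \<omega>) = b} * case_prod W b)"
      apply (rule G[OF \<open>prob_space M\<close>])
      subgoal using finB finC by simp
      subgoal by (auto simp: zv_def sv_def B_def C_def)
      subgoal for b using seq[of b] mE by simp
      done
    also have "\<dots> = (\<Sum>b\<in>B \<times> C. measure M (E (fst b) (snd b)) * case_prod W b)"
      by (intro sum.cong refl) (simp add: seq)
    also have "\<dots> = (\<Sum>zz\<in>B. \<Sum>ss\<in>C. measure M (E zz ss) * W zz ss)"
      by (simp add: sum.cartesian_product) (intro sum.cong refl, auto)
    also have "\<dots> = (\<Sum>zz\<in>B. measure M (EZ zz) * (\<Sum>ss\<in>C. (\<Prod>i\<in>{1..n}. c (zz i) (ss i)) * W zz ss))"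
      by (simp add: Q sum_distrib_left mult.assoc)
    finally show ?thesis by simp
  qed
  have emp: "emp_type n Z \<omega> = tp (zv \<omega>)" for \<omega>
  proof -
    have e: "{i\<in>{1..n}. zv \<omega> i = a} = {i\<in>{1..n}. Z i \<omega> = a}" for a by (auto simp: zv_def)
    show ?thesis unfolding emp_type_def tp_def e ..
  qed
  define m where "m z = (\<Sum>s\<in>UNIV. c z s * f (z, s))" for z
  define v where "v z = (\<Sum>s\<in>UNIV. c z s * (f (z, s))\<^sup>2)" for z
  define K where "K = (real n)\<^sup>2 * (\<Sum>z\<in>UNIV. \<Sum>s\<in>UNIV. p z * cond_pmf PZS z s * f (z, s))\<^sup>2
         + real n * (\<Sum>z\<in>UNIV. \<Sum>s\<in>UNIV. p z * cond_pmf PZS z s * (f (z, s))\<^sup>2)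
         - real n * (\<Sum>z\<in>UNIV. p z * (\<Sum>s\<in>UNIV. cond_pmf PZS z s * f (z, s))\<^sup>2)"
  have inner: "(\<Sum>ss\<in>C. (\<Prod>i\<in>{1..n}. c (zz i) (ss i)) * (\<Sum>i\<in>{1..n}. f (zz i, ss i))\<^sup>2) = K"
    if pos: "measure M (EZ zz) > 0" and t: "tp zz = p" for zz
  proof -
    have "(\<Sum>ss\<in>C. (\<Prod>i\<in>{1..n}. c (zz i) (ss i)) * (\<Sum>i\<in>{1..n}. f (zz i, ss i))\<^sup>2)
       = (\<Sum>i\<in>{1..n}. \<Sum>j\<in>{1..n}. if i = j then v (zz i) else m (zz i) * m (zz j))"
      unfolding C_def m_def v_def
      by (rule L[where c="\<lambda>i s. c (zz i) s" and g="\<lambda>i s. f (zz i, s)", simplified]) (auto intro: one[OF pos])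
    also have "\<dots> = (\<Sum>i\<in>{1..n}. m (zz i))\<^sup>2 + (\<Sum>i\<in>{1..n}. v (zz i)) - (\<Sum>i\<in>{1..n}. (m (zz i))\<^sup>2)"
      by (rule KK)
    also have "\<dots> = (real n * (\<Sum>z\<in>UNIV. p z * m z))\<^sup>2 + real n * (\<Sum>z\<in>UNIV. p z * v z)
        - real n * (\<Sum>z\<in>UNIV. p z * (m z)\<^sup>2)"
      using cnt_sum[OF t[unfolded tp_def], of m] cnt_sum[OF t[unfolded tp_def], of v]
        cnt_sum[OF t[unfolded tp_def], of "\<lambda>z. (m z)\<^sup>2"] by (simp only:)
    also have "\<dots> = K"
    proof -
      have a1: "(\<Sum>z\<in>UNIV. p z * m z) = (\<Sum>z\<in>UNIV. \<Sum>s\<in>UNIV. p z * cond_pmf PZS z s * f (z, s))"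
        by (simp add: m_def c_def sum_distrib_left mult.assoc)
      have a2: "(\<Sum>z\<in>UNIV. p z * v z) = (\<Sum>z\<in>UNIV. \<Sum>s\<in>UNIV. p z * cond_pmf PZS z s * (f (z, s))\<^sup>2)"
        by (simp add: v_def c_def sum_distrib_left mult.assoc)
      have a3: "(\<Sum>z\<in>UNIV. p z * (m z)\<^sup>2) = (\<Sum>z\<in>UNIV. p z * (\<Sum>s\<in>UNIV. cond_pmf PZS z s * f (z, s))\<^sup>2)"
        by (simp add: m_def c_def)
      show ?thesis unfolding K_def a1 a2 a3 power_mult_distrib ..
    qed
    finally show ?thesis .
  qed
  have onePi: "(\<Sum>ss\<in>C. (\<Prod>i\<in>{1..n}. c (zz i) (ss i))) = 1"
    if pos: "measure M (EZ zz) > 0" for zz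
  proof -
    have "(\<Sum>ss\<in>C. (\<Prod>i\<in>{1..n}. c (zz i) (ss i))) = (\<Prod>i\<in>{1..n}. \<Sum>s\<in>UNIV. c (zz i) s)"
      unfolding C_def by (rule prod_sum_PiE[symmetric]) auto
    also have "\<dots> = 1" using one[OF pos] by simp
    finally show ?thesis .
  qed
  define D where "D = (\<Sum>zz\<in>B. if tp zz = p then measure M (EZ zz) else 0)"
  have indA: "indicator A \<omega> = (if tp (zv \<omega>) = p then 1 else 0 :: real)" if "\<omega> \<in> space M" for \<omega>
    using that by (simp add: A_def emp indicator_def)
  have sumf: "(\<Sum>i\<in>{1..n}. f (Z i \<omega>, S i \<omega>)) = (\<Sum>i\<in>{1..n}. f (zv \<omega> i, sv \<omega> i))" for \<omega>
    by (intro sum.cong refl) (simp add: zv_def sv_def)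
  have num: "(\<integral>\<omega>. indicator A \<omega> * (\<Sum>i\<in>{1..n}. f (Z i \<omega>, S i \<omega>))\<^sup>2 \<partial>M) = D * K"
  proof -
    have "(\<integral>\<omega>. indicator A \<omega> * (\<Sum>i\<in>{1..n}. f (Z i \<omega>, S i \<omega>))\<^sup>2 \<partial>M)
      = (\<integral>\<omega>. (\<lambda>zz ss. (if tp zz = p then 1 else 0) * (\<Sum>i\<in>{1..n}. f (zz i, ss i))\<^sup>2) (zv \<omega>) (sv \<omega>) \<partial>M)"
      by (rule Bochner_Integration.integral_cong) (use indA sumf in auto)
    also have "\<dots> = (\<Sum>zz\<in>B. measure M (EZ zz) * (\<Sum>ss\<in>C. (\<Prod>i\<in>{1..n}. c (zz i) (ss i)) *
         ((if tp zz = p then 1 else 0) * (\<Sum>i\<in>{1..n}. f (zz i, ss i))\<^sup>2)))"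
      by (rule INT)
    also have "\<dots> = (\<Sum>zz\<in>B. (if tp zz = p then measure M (EZ zz) else 0) * K)"
    proof (intro sum.cong refl)
      fix zz
      show "measure M (EZ zz) * (\<Sum>ss\<in>C. (\<Prod>i\<in>{1..n}. c (zz i) (ss i)) *
         ((if tp zz = p then 1 else 0) * (\<Sum>i\<in>{1..n}. f (zz i, ss i))\<^sup>2))
         = (if tp zz = p then measure M (EZ zz) else 0) * K"
      proof (cases "tp zz = p \<and> measure M (EZ zz) > 0")
        case True then show ?thesis using inner[of zz] by simp
      next
        case False
        then have "tp zz \<noteq> p \<or> measure M (EZ zz) = 0" using measure_nonneg[of M "EZ zz"] by linarith
        then show ?thesis by auto
      qed
    qed
    also have "\<dots> = D * K" by (simp add: D_def sum_distrib_right)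
    finally show ?thesis .
  qed
  have den: "measure M A = D"
  proof -
    have "measure M A = (\<integral>\<omega>. indicator A \<omega> \<partial>M)"
      by (simp add: A_def Int_absorb2)
    also have "\<dots> = (\<integral>\<omega>. (\<lambda>zz ss. (if tp zz = p then 1 else 0 :: real)) (zv \<omega>) (sv \<omega>) \<partial>M)"
      by (rule Bochner_Integration.integral_cong) (simp_all add: indA)
    also have "\<dots> = (\<Sum>zz\<in>B. measure M (EZ zz) * (\<Sum>ss\<in>C. (\<Prod>i\<in>{1..n}. c (zz i) (ss i)) *
         (if tp zz = p then 1 else 0)))"
      by (rule INT)
    also have "\<dots> = D" unfolding D_def
    proof (intro sum.cong refl)
      fix zz
      show "measure M (EZ zz) * (\<Sum>ss\<in>C. (\<Prod>i\<in>{1..n}. c (zz i) (ss i)) * (if tp zz = p then 1 else 0))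
         = (if tp zz = p then measure M (EZ zz) else 0)"
      proof (cases "tp zz = p \<and> measure M (EZ zz) > 0")
        case True then show ?thesis using onePi[of zz] by simp
      next
        case False
        then have "tp zz \<noteq> p \<or> measure M (EZ zz) = 0" using measure_nonneg[of M "EZ zz"] by linarith
        then show ?thesis by auto
      qed
    qed
    finally show ?thesis .
  qed
  have "D > 0" using ptype den by (simp add: A_def)
  then show ?thesis
    using num den unfolding cexp_event_def A_def[symmetric] K_def[symmetric] by simp
qed
end
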